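(* Let $p\in(0,1)$, $\gamma>0$, $B>0$, $w\in\mathbb{N}$. Then $\mathcal{T}_N^*$ is a strictly increasing function of $N\in\mathbb{N}$.
   Context: Logarithms are base 2. For an admissible (nonnegative, with sum at most $B$) sequence $(x_j)_{j\ge1}$, $$\mathcal{T}_\infty(x_1,x_2,\dots)=\sum_{k=1}^{w}p^2(1-p)^{k-1}\frac{k}{2}\log_2\!\Big(1+\gamma\frac{B}{k}\Big)+\sum_{j=1}^{\infty}p(1-p)^{j+w-1}\frac12\log_2(1+\gamma x_j)+\sum_{k=1}^{\infty}p^2(1-p)^{k+w-1}\frac{w}{2}\log_2\!\Big(1+\gamma\frac{B-\sum_{j=1}^{k}x_j}{w}\Big).$$ For $N\in\mathbb{N}$ and $\xi_1,\dots,\xi_N\ge0$ with $\sum_{j=1}^N\xi_j\le B$, define $\mathcal{T}_N(\xi_1,\dots,\xi_N)=\mathcal{T}_\infty(\xi_1,\dots,\xi_N,0,0,\dots)$, and let $\mathcal{T}_N^*$ be the supremum of $\mathcal{T}_N$ over this set. *)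

theory Defs
  imports "HOL-Analysis.Analysis"
begin

text \<open>Sequences (x_j)_{j\<ge>1} are represented as functions nat \<Rightarrow> real;
  the value at index 0 is ignored.\<close>

definition T_inf :: "real \<Rightarrow> real \<Rightarrow> real \<Rightarrow> nat \<Rightarrow> (nat \<Rightarrow> real) \<Rightarrow> real" where
  "T_inf p \<gamma> B w x =
     (\<Sum>k=1..w. p^2 * (1-p)^(k-1) * (real k / 2) * log 2 (1 + \<gamma> * B / real k))
   + (\<Sum>i. (let j = Suc i in p * (1-p)^(j+w-1) * (1/2) * log 2 (1 + \<gamma> * x j)))
   + (\<Sum>i. (let k = Suc i in p^2 * (1-p)^(k+w-1) * (real w / 2) *
           log 2 (1 + \<gamma> * (B - (\<Sum>j=1..k. x j)) / real w)))"

definition T_N :: "real \<Rightarrow> real \<Rightarrow> real \<Rightarrow> nat \<Rightarrow> nat \<Rightarrow> (nat \<Rightarrow> real) \<Rightarrow> real" where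
  "T_N p \<gamma> B w N \<xi> = T_inf p \<gamma> B w (\<lambda>j. if 1 \<le> j \<and> j \<le> N then \<xi> j else 0)"

definition feasible_N :: "real \<Rightarrow> nat \<Rightarrow> (nat \<Rightarrow> real) set" where
  "feasible_N B N = {\<xi>. (\<forall>j\<in>{1..N}. 0 \<le> \<xi> j) \<and> (\<Sum>j=1..N. \<xi> j) \<le> B}"

definition T_N_star :: "real \<Rightarrow> real \<Rightarrow> real \<Rightarrow> nat \<Rightarrow> nat \<Rightarrow> real" where
  "T_N_star p \<gamma> B w N = (SUP \<xi>\<in>feasible_N B N. T_N p \<gamma> B w N \<xi>)"

end

theory Submission
  imports Defs
begin



lemma ln_lower: fixes u :: real assumes "0 \<le> u" shows "u / (1 + u) \<le> ln (1 + u)"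
proof -
  have "0 < 1 / (1 + u)" using assms by simp
  then have "ln (1 / (1 + u)) \<le> 1 / (1 + u) - 1" by (rule ln_le_minus_one)
  moreover have "ln (1 / (1 + u)) = - ln (1 + u)" using assms by (simp add: ln_div)
  moreover have "1 / (1 + u) - 1 = - (u / (1 + u))" using assms by (simp add: field_simps)
  ultimately show ?thesis by linarith
qed

lemma ln_ratio: fixes u v :: real assumes "0 < u" "0 < v" shows "ln u - ln v \<le> (u - v) / v"
  using ln_diff_le assms by blast

lemma keyA:
  fixes g D w t :: real
  assumes g: "0 < g" and D: "0 < D" and w: "1 \<le> w" and t: "t = D / (2 * (1 + w))"
  shows "0 < ln (1 + g * t) + w * ln (1 + g * (D - t) / w) - w * ln (1 + g * D / w)"
proof -
  have t0: "0 < t" using t D w by (simp add: divide_pos_pos)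
  have tD: "t * (1 + w) = D / 2" using t D w by (auto simp: field_simps)
  have "t * 1 \<le> t * (1 + w)" by (rule mult_left_mono) (use t0 w in auto)
  then have Dt: "0 < D - t" using tD D by linarith
  define v where "v = 1 + g * (D - t) / w"
  define u where "u = 1 + g * D / w"
  have v0: "0 < v" using Dt g w unfolding v_def by (auto intro!: add_pos_nonneg)
  have u0: "0 < u" using D g w unfolding u_def by (auto intro!: add_pos_nonneg)
  have "ln u - ln v \<le> (u - v) / v" by (rule ln_ratio[OF u0 v0])
  also have "(u - v) = g * t / w" unfolding u_def v_def using w by (simp add: field_simps)
  finally have h0: "ln u - ln v \<le> g * t / w / v" .
  have h1: "w * (ln u - ln v) \<le> w * (g * t / w / v)" using h0 w by (intro mult_left_mono) auto
  have "w * (g * t / w / v) = g * t * w / (w + g * (D - t))"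
    unfolding v_def using w by (simp add: field_simps)
  with h1 have h1': "w * (ln u - ln v) \<le> g * t * w / (w + g * (D - t))" by simp
  have h2: "g * t / (1 + g * t) \<le> ln (1 + g * t)" using g t0 by (intro ln_lower) auto
  have pos: "0 < w + g * (D - t)" "0 < 1 + g * t" using w g Dt t0 by (auto intro!: add_pos_nonneg)
  have "g * t * w / (w + g * (D - t)) < g * t / (1 + g * t)"
  proof -
    have "w * (1 + g * t) < w + g * (D - t)"
    proof -
      have "g * t * (1 + w) = g * D / 2" using tD by (metis mult.assoc times_divide_eq_right)
      moreover have "w + g * (D - t) - w * (1 + g * t) = g * D - g * t * (1 + w)"
        by (simp add: algebra_simps)
      moreover have "0 < g * D" using g D by simp
      ultimately show ?thesis by linarith
    qed
    then have "g * t * w * (1 + g * t) < g * t * (w + g * (D - t))"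
      using g t0 by (simp add: mult.assoc)
    then show ?thesis using pos by (simp add: divide_simps)
  qed
  then show ?thesis using h1' h2 unfolding u_def v_def by (simp add: algebra_simps)
qed

lemma keyB:
  fixes g x t A A' w :: real
  assumes g: "0 < g" and x: "0 < x" and t: "t = x / 4" and A: "0 < A" and A': "0 \<le> A'" "A' \<le> A"
    and w: "1 \<le> w"
  shows "0 < A * (ln (1 + g * (x - t)) - ln (1 + g * x)) + A' * ln (1 + g * t)
             + (A - A') * (w * ln (1 + g * t / w))"
proof -
  have t0: "0 < t" and xt: "t < x - t" using t x by auto
  have p1: "0 < 1 + g * (x - t)" "0 < 1 + g * x" "0 < 1 + g * t" using g t0 xt x
    by (auto intro!: add_pos_nonneg)
  have "ln (1 + g * x) - ln (1 + g * (x - t)) \<le> ((1 + g * x) - (1 + g * (x - t))) / (1 + g * (x - t))"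
    by (rule ln_ratio) (use p1 in auto)
  then have h1: "ln (1 + g * x) - ln (1 + g * (x - t)) \<le> g * t / (1 + g * (x - t))"
    by (simp add: algebra_simps)
  have h2: "g * t / (1 + g * t) \<le> ln (1 + g * t)" using g t0 by (intro ln_lower) auto
  have "(g * t / w) / (1 + g * t / w) \<le> ln (1 + g * t / w)" using g t0 w by (intro ln_lower) auto
  then have "w * ((g * t / w) / (1 + g * t / w)) \<le> w * ln (1 + g * t / w)" using w
    by (intro mult_left_mono) auto
  moreover have "w * ((g * t / w) / (1 + g * t / w)) = g * t / (1 + g * t / w)" using w
    by (simp add: field_simps)
  moreover have "g * t / (1 + g * t) \<le> g * t / (1 + g * t / w)"
  proof (rule divide_left_mono)
    have "g * t * 1 \<le> g * t * w" using g t0 w by (intro mult_left_mono) auto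
    then have "g * t / w \<le> g * t" using w by (simp add: divide_le_eq)
    then show "1 + g * t / w \<le> 1 + g * t" by simp
  qed (use g t0 w in \<open>auto intro!: add_pos_nonneg mult_pos_pos\<close>)
  ultimately have h3: "g * t / (1 + g * t) \<le> w * ln (1 + g * t / w)" by linarith
  have h4: "g * t / (1 + g * (x - t)) < g * t / (1 + g * t)"
    using g t0 xt p1 by (intro divide_strict_left_mono) (auto simp: mult_strict_left_mono)
  define q where "q = g * t / (1 + g * t)"
  define r where "r = g * t / (1 + g * (x - t))"
  define L1 where "L1 = ln (1 + g * t)"
  define Wl where "Wl = w * ln (1 + g * t / w)"
  define lx where "lx = ln (1 + g * x)"
  define lxt where "lxt = ln (1 + g * (x - t))"
  have f1: "A' * q \<le> A' * L1" unfolding q_def L1_def using h2 A' by (intro mult_left_mono) auto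
  have f2: "(A - A') * q \<le> (A - A') * Wl" unfolding q_def Wl_def using h3 A' by (intro mult_left_mono) auto
  have f3: "A * (lx - lxt) \<le> A * r" unfolding lx_def lxt_def r_def using h1 A by (intro mult_left_mono) auto
  have f4: "A * r < A * q" unfolding r_def q_def using h4 A by (intro mult_strict_left_mono) auto
  have e1: "(A - A') * q = A * q - A' * q" by (rule left_diff_distrib)
  have e2: "(A - A') * Wl = A * Wl - A' * Wl" by (rule left_diff_distrib)
  have e3: "A * (lx - lxt) = A * lx - A * lxt" by (rule right_diff_distrib)
  have e4: "A * (lxt - lx) = A * lxt - A * lx" by (rule right_diff_distrib)
  have f2': "A * q - A' * q \<le> A * Wl - A' * Wl" using f2 unfolding e1 e2 .
  have f3': "A * lx - A * lxt \<le> A * r" using f3 unfolding e3 .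
  have "0 < A * lxt - A * lx + A' * L1 + (A * Wl - A' * Wl)"
    using f1 f2' f3' f4 by linarith
  then have "0 < A * (lxt - lx) + A' * L1 + (A - A') * Wl" unfolding e2 e4 .
  then show ?thesis unfolding lxt_def lx_def L1_def Wl_def .
qed


locale setting =
  fixes p g B :: real and w :: nat
  assumes p0: "0 < p" and p1: "p < 1" and g0: "0 < g" and B0: "0 < B" and w1: "1 \<le> w"
begin

definition aa :: "nat \<Rightarrow> real" where "aa k = p * (1-p)^(k+w-1)"
definition bb :: "nat \<Rightarrow> real" where "bb k = p^2 * (1-p)^(k+w-1)"
definition CC :: real where
  "CC = (\<Sum>k=1..w. p^2 * (1-p)^(k-1) * (real k / 2) * log 2 (1 + g * B / real k))"
definition Lg :: "real \<Rightarrow> real" where "Lg x = log 2 (1 + g * x)"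
definition GG :: "real \<Rightarrow> real" where "GG s = (real w / 2) * log 2 (1 + g * (B - s) / real w)"
definition SS :: "(nat \<Rightarrow> real) \<Rightarrow> nat \<Rightarrow> real" where "SS x k = (\<Sum>j=1..k. x j)"
definition FF :: "nat \<Rightarrow> (nat \<Rightarrow> real) \<Rightarrow> real" where
  "FF N x = CC + (\<Sum>j=1..N. aa j * (1/2) * Lg (x j)) + (\<Sum>k=1..N. bb k * GG (SS x k))
     + aa (Suc N) * GG (SS x N)"

lemma SS_mask: "SS (\<lambda>j. if 1 \<le> j \<and> j \<le> N then x j else 0) k = SS x (min k N)"
proof (induction k)
  case 0 then show ?case by (simp add: SS_def)
next
  case (Suc k)
  then show ?case
  proof (cases "Suc k \<le> N")
    case True then show ?thesis using Suc by (auto simp: SS_def min_def)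
  next
    case False
    then have "min (Suc k) N = min k N" by simp
    with Suc False show ?thesis by (auto simp: SS_def)
  qed
qed

lemma bb_tail: "(\<lambda>i. bb (Suc (i + N))) sums aa (Suc N)"
proof -
  have "(\<lambda>i. (p^2 * (1-p)^(N+w)) * (1-p)^i) sums ((p^2 * (1-p)^(N+w)) * (1 / (1 - (1-p))))"
    by (rule sums_mult, rule geometric_sums) (use p0 p1 in auto)
  moreover have "(p^2 * (1-p)^(N+w)) * (1 / (1 - (1-p))) = aa (Suc N)"
    using p0 by (simp add: aa_def power2_eq_square)
  moreover have "bb (Suc (i + N)) = (p^2 * (1-p)^(N+w)) * (1-p)^i" for i
    by (simp add: bb_def power_add algebra_simps)
  ultimately show ?thesis by simp
qed

lemma T_eq: "T_N p g B w N x = FF N x"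
proof -
  define y where "y = (\<lambda>j. if 1 \<le> j \<and> j \<le> N then x j else 0)"
  have s2: "(\<Sum>i. (let j = Suc i in p * (1-p)^(j+w-1) * (1/2) * log 2 (1 + g * y j)))
      = (\<Sum>j=1..N. aa j * (1/2) * Lg (x j))"
  proof -
    have "(\<Sum>i. (let j = Suc i in p * (1-p)^(j+w-1) * (1/2) * log 2 (1 + g * y j)))
        = (\<Sum>i<N. (let j = Suc i in p * (1-p)^(j+w-1) * (1/2) * log 2 (1 + g * y j)))"
      by (rule suminf_finite) (auto simp: y_def Let_def)
    also have "\<dots> = (\<Sum>i<N. aa (Suc i) * (1/2) * Lg (x (Suc i)))"
      by (rule sum.cong) (auto simp: y_def aa_def Lg_def Let_def)
    also have "\<dots> = (\<Sum>j=1..N. aa j * (1/2) * Lg (x j))"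
      by (rule sum_bounds_lt_plus1)
    finally show ?thesis .
  qed
  define f where "f i = (let k = Suc i in p^2 * (1-p)^(k+w-1) * (real w / 2) *
           log 2 (1 + g * (B - (\<Sum>j=1..k. y j)) / real w))" for i
  have fi: "f i = bb (Suc i) * GG (SS x (min (Suc i) N))" for i
    using SS_mask[of N x "Suc i"] by (simp add: f_def bb_def GG_def Let_def SS_def y_def)
  have "(\<lambda>i. f (i + N)) sums (aa (Suc N) * GG (SS x N))"
  proof -
    have "f (i + N) = bb (Suc (i + N)) * GG (SS x N)" for i
      by (simp add: fi min_def)
    then show ?thesis using sums_mult2[OF bb_tail] by simp
  qed
  then have "f sums (aa (Suc N) * GG (SS x N) + (\<Sum>i<N. f i))"
    by (simp add: sums_iff_shift)
  then have s3: "suminf f = aa (Suc N) * GG (SS x N) + (\<Sum>k=1..N. bb k * GG (SS x k))"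
  proof -
    assume h: "f sums (aa (Suc N) * GG (SS x N) + (\<Sum>i<N. f i))"
    have "(\<Sum>i<N. f i) = (\<Sum>i<N. bb (Suc i) * GG (SS x (Suc i)))"
      by (rule sum.cong) (auto simp: fi min_def)
    also have "\<dots> = (\<Sum>k=1..N. bb k * GG (SS x k))" by (rule sum_bounds_lt_plus1)
    finally show ?thesis using h by (simp add: sums_iff)
  qed
  have "T_N p g B w N x = CC + (\<Sum>i. (let j = Suc i in p * (1-p)^(j+w-1) * (1/2) * log 2 (1 + g * y j))) + suminf f"
    unfolding T_N_def T_inf_def CC_def f_def[abs_def] y_def by (rule refl)
  then show ?thesis unfolding FF_def using s2 s3 by simp
qed

lemma FF_cong: assumes "\<And>j. 1 \<le> j \<Longrightarrow> j \<le> N \<Longrightarrow> x j = y j" shows "FF N x = FF N y"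
proof -
  have "SS x k = SS y k" if "k \<le> N" for k
    unfolding SS_def using that assms by (intro sum.cong) auto
  then show ?thesis unfolding FF_def using assms
    by (intro arg_cong2[where f="(+)"] sum.cong) auto
qed

lemma SS_mono_nonneg: assumes "\<And>j. 1 \<le> j \<Longrightarrow> j \<le> N \<Longrightarrow> 0 \<le> x j" "k \<le> N"
  shows "SS x k \<le> SS x N"
  unfolding SS_def using assms by (intro sum_mono2) auto

definition KK :: "nat \<Rightarrow> (nat \<Rightarrow> real) set" where
  "KK N = PiE UNIV (\<lambda>j. if j \<in> {1..N} then {0..B} else {0}) \<inter> {x. SS x N \<le> B}"

lemma compact_KK: "compact (KK N)"
proof -
  have "compact (PiE UNIV (\<lambda>j. if j \<in> {1..N} then {0..B} else {0::real}))"
    using compactin_PiE[of "\<lambda>i. euclidean" UNIV "\<lambda>j. if j \<in> {1..N} then {0..B} else {0::real}"]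
    by (simp add: euclidean_product_topology)
  moreover have "closed {x::nat\<Rightarrow>real. SS x N \<le> B}"
    unfolding SS_def by (intro closed_Collect_le continuous_intros) auto
  ultimately show ?thesis unfolding KK_def by (rule compact_Int_closed)
qed

lemma KK_nonneg: assumes "x \<in> KK N" "1 \<le> j" "j \<le> N" shows "0 \<le> x j"
proof -
  have "x j \<in> (if j \<in> {1..N} then {0..B} else {0})"
    using assms(1) unfolding KK_def PiE_def Pi_def by blast
  then show ?thesis using assms by auto
qed

lemma cc: "continuous_on S (\<lambda>x::nat\<Rightarrow>real. x i)"
  by (rule continuous_on_subset[OF continuous_on_product_coordinates]) simp

lemma cont_FF: "continuous_on (KK N) (FF N)"
proof -
  have pos1: "0 < 1 + g * x j" if "x \<in> KK N" "j \<in> {1..N}" for x j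
    using KK_nonneg[OF that(1)] that(2) g0 by (auto intro!: add_pos_nonneg)
  have pos2: "0 < 1 + g * (B - SS x k) / real w" if "x \<in> KK N" "k \<le> N" for x k
  proof -
    have "SS x k \<le> SS x N" using SS_mono_nonneg[OF KK_nonneg[OF that(1)] that(2)] by auto
    also have "\<dots> \<le> B" using that(1) by (auto simp: KK_def)
    finally show ?thesis using g0 w1 by (intro add_pos_nonneg) auto
  qed
  have c1: "continuous_on (KK N) (\<lambda>x. SS x k)" for k
    unfolding SS_def by (intro continuous_intros cc)
  have c2: "continuous_on (KK N) (\<lambda>x. Lg (x j))" if "j \<in> {1..N}" for j
    unfolding Lg_def
    by (rule continuous_on_log) (auto intro!: continuous_intros cc dest: pos1[OF _ that])
  have c3: "continuous_on (KK N) (\<lambda>x. GG (SS x k))" if "k \<le> N" for k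
  proof -
    have "continuous_on (KK N) (\<lambda>x. log 2 (1 + g * (B - SS x k) / real w))"
      using w1 by (rule_tac continuous_on_log) (auto intro!: continuous_intros c1 dest: pos2[OF _ that])
    then show ?thesis unfolding GG_def by (intro continuous_on_mult continuous_on_const)
  qed
  show ?thesis unfolding FF_def
    apply (intro continuous_on_add continuous_on_const continuous_on_sum continuous_on_mult c2 c3)
    apply auto
    done
qed

end


context setting begin

lemma exists_max: "\<exists>x\<in>feasible_N B N. \<forall>y\<in>feasible_N B N. FF N y \<le> FF N x"
proof -
  have ne: "(\<lambda>_. 0) \<in> KK N" unfolding KK_def SS_def using B0 by (auto simp: PiE_iff)
  obtain x where x: "x \<in> KK N" "\<forall>y\<in>KK N. FF N y \<le> FF N x"
    using continuous_attains_sup[OF compact_KK _ cont_FF] ne by blast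
  have xf: "x \<in> feasible_N B N" using x(1) KK_nonneg unfolding feasible_N_def
    by (auto simp: KK_def SS_def)
  have "FF N y \<le> FF N x" if y: "y \<in> feasible_N B N" for y
  proof -
    define y' where "y' = (\<lambda>j. if j \<in> {1..N} then y j else 0)"
    have ynn: "\<forall>j\<in>{1..N}. 0 \<le> y j" and ys: "SS y N \<le> B"
      using y by (auto simp: feasible_N_def SS_def)
    have yle: "y j \<le> SS y N" if "j \<in> {1..N}" for j
      unfolding SS_def using ynn that by (intro member_le_sum) auto
    have eqS: "SS y' N = SS y N" unfolding SS_def y'_def by (intro sum.cong) auto
    have "y' \<in> KK N" unfolding KK_def
    proof
      show "y' \<in> PiE UNIV (\<lambda>j. if j \<in> {1..N} then {0..B} else {0})"
        using ynn yle ys by (force simp: PiE_iff y'_def)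
      show "y' \<in> {x. SS x N \<le> B}" using eqS ys by simp
    qed
    moreover have "FF N y' = FF N y" by (rule FF_cong) (auto simp: y'_def)
    ultimately show ?thesis using x(2) by metis
  qed
  with xf show ?thesis by blast
qed

lemma Tstar: "\<exists>x\<in>feasible_N B N. T_N_star p g B w N = FF N x \<and> (\<forall>y\<in>feasible_N B N. FF N y \<le> FF N x)"
proof -
  obtain x where x: "x \<in> feasible_N B N" "\<forall>y\<in>feasible_N B N. FF N y \<le> FF N x"
    using exists_max by blast
  have "T_N_star p g B w N = Sup (FF N ` feasible_N B N)"
    unfolding T_N_star_def using T_eq by simp
  also have "\<dots> = FF N x" using x by (intro cSup_eq_maximum) auto
  finally show ?thesis using x by blast
qed

lemma bb_diff: "bb k = aa k - aa (Suc k)"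
proof -
  define m where "m = k + w - 1"
  have m: "k + w = Suc m" using w1 unfolding m_def by simp
  then have "k + w - 1 = m" "Suc k + w - 1 = Suc m" by auto
  then show ?thesis by (simp add: aa_def bb_def power2_eq_square algebra_simps)
qed

lemma sum_bb: "j \<le> Suc N \<Longrightarrow> (\<Sum>k=j..N. bb k) = aa j - aa (Suc N)"
proof -
  assume j: "j \<le> Suc N"
  have "(\<Sum>k=j..N. bb k) = (\<Sum>k=j..N. - (aa (Suc k) - aa k))" by (simp add: bb_diff)
  also have "\<dots> = - (\<Sum>k=j..N. (aa (Suc k) - aa k))" by (rule sum_negf)
  also have "\<dots> = - (aa (Suc N) - aa j)" using sum_Suc_diff[OF j, of aa] by simp
  finally show ?thesis by simp
qed

lemma aa_pos: "0 < aa k" unfolding aa_def using p0 p1 by simp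
lemma bb_nonneg: "0 \<le> bb k" unfolding bb_def using p0 p1 by simp

lemma FF_Suc: "FF (Suc N) y = CC + (\<Sum>j=1..N. aa j * (1/2) * Lg (y j)) + aa (Suc N) * (1/2) * Lg (y (Suc N))
   + (\<Sum>k=1..N. bb k * GG (SS y k)) + aa (Suc N) * GG (SS y (Suc N))"
proof -
  have "bb (Suc N) * GG (SS y (Suc N)) + aa (Suc (Suc N)) * GG (SS y (Suc N)) = aa (Suc N) * GG (SS y (Suc N))"
    by (simp add: bb_diff algebra_simps)
  then show ?thesis unfolding FF_def by simp
qed

lemma GGB: "GG B = 0" by (simp add: GG_def)

end

context setting begin

lemma improve: assumes xf: "x \<in> feasible_N B N"
  shows "\<exists>y\<in>feasible_N B (Suc N). FF N x < FF (Suc N) y"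
proof -
  have xnn: "\<And>j. 1 \<le> j \<Longrightarrow> j \<le> N \<Longrightarrow> 0 \<le> x j" and xs: "SS x N \<le> B"
    using xf by (auto simp: feasible_N_def SS_def)
  have ln2: "0 < ln (2::real)" by simp
  show ?thesis
  proof (cases "SS x N < B")
    case True
    define D where "D = B - SS x N"
    define t where "t = D / (2 * (1 + real w))"
    define y where "y = x(Suc N := t)"
    have D0: "0 < D" using True D_def by simp
    have t0: "0 < t" using D0 t_def by (simp add: divide_pos_pos)
    have tD: "t \<le> D" unfolding t_def using D0 by (simp add: divide_le_eq)
    have Sy: "SS y k = SS x k" if "k \<le> N" for k
      unfolding SS_def y_def using that by (intro sum.cong) auto
    have SyN: "SS y (Suc N) = SS x N + t"
      using Sy[of N] by (simp add: SS_def y_def)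
    have yf: "y \<in> feasible_N B (Suc N)"
      unfolding feasible_N_def
    proof (intro CollectI conjI ballI)
      fix j assume "j \<in> {1..Suc N}"
      then show "0 \<le> y j" using xnn t0 by (cases "j = Suc N") (auto simp: y_def)
    next
      show "(\<Sum>j = 1..Suc N. y j) \<le> B" using SyN tD D_def unfolding SS_def by simp
    qed
    have s1: "(\<Sum>j=1..N. aa j * (1/2) * Lg (y j)) = (\<Sum>j=1..N. aa j * (1/2) * Lg (x j))"
      by (intro sum.cong) (auto simp: y_def)
    have s2: "(\<Sum>k=1..N. bb k * GG (SS y k)) = (\<Sum>k=1..N. bb k * GG (SS x k))"
      by (intro sum.cong) (auto simp: Sy)
    have diff: "FF (Suc N) y - FF N x = aa (Suc N) * ((1/2) * Lg t + GG (SS x N + t) - GG (SS x N))"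
      unfolding FF_Suc s1 s2 SyN by (simp add: FF_def y_def algebra_simps)
    have e1: "B - (SS x N + t) = D - t" "B - SS x N = D" by (auto simp: D_def)
    have "(1/2) * Lg t + GG (SS x N + t) - GG (SS x N)
       = (ln (1 + g * t) + real w * ln (1 + g * (D - t) / real w) - real w * ln (1 + g * D / real w)) / (2 * ln 2)"
      unfolding Lg_def GG_def log_def e1 by (simp add: field_simps)
    moreover have "0 < ln (1 + g * t) + real w * ln (1 + g * (D - t) / real w) - real w * ln (1 + g * D / real w)"
      using keyA[OF g0 D0, of "real w" t] w1 t_def by simp
    ultimately have "0 < (1/2) * Lg t + GG (SS x N + t) - GG (SS x N)" using ln2 by simp
    then have "0 < FF (Suc N) y - FF N x" unfolding diff using aa_pos by simp
    then show ?thesis using yf by auto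
  next
    case False
    then have SxN: "SS x N = B" using xs by simp
    define J where "J = {j\<in>{1..N}. 0 < x j}"
    have fJ: "finite J" unfolding J_def by simp
    have "J \<noteq> {}"
    proof
      assume "J = {}"
      then have "\<forall>j\<in>{1..N}. x j = 0" using xnn unfolding J_def by force
      then have "SS x N = 0" unfolding SS_def by simp
      then show False using SxN B0 by simp
    qed
    define j where "j = Max J"
    have jJ: "j \<in> J" unfolding j_def using fJ \<open>J \<noteq> {}\<close> by (rule Max_in)
    then have j1: "1 \<le> j" and jN: "j \<le> N" and xj: "0 < x j" unfolding J_def by auto
    have zero: "x i = 0" if "j < i" "i \<le> N" for i
    proof (rule ccontr)
      assume "x i \<noteq> 0"
      then have "0 < x i" using xnn[of i] that j1 by simp
      then have "i \<in> J" unfolding J_def using that j1 by simp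
      then have "i \<le> j" unfolding j_def using fJ by simp
      then show False using that by simp
    qed
    have SSB: "SS x k = B" if "j \<le> k" "k \<le> N" for k
    proof -
      have "sum x ({1..N} - {1..k}) = SS x N - SS x k"
        unfolding SS_def using that by (intro sum_diff) auto
      moreover have "sum x ({1..N} - {1..k}) = 0"
        by (intro sum.neutral) (use that zero in auto)
      ultimately show ?thesis using SxN by simp
    qed
    define t where "t = x j / 4"
    define y where "y = x(j := x j - t, Suc N := t)"
    have t0: "0 < t" using xj t_def by simp
    have yj: "y j = x j - t" using jN by (simp add: y_def)
    have yN: "y (Suc N) = t" by (simp add: y_def)
    have yo: "y i = x i" if "i \<noteq> j" "i \<noteq> Suc N" for i using that by (simp add: y_def)
    have Sy: "SS y k = (if j \<le> k then SS x k - t else SS x k)" if "k \<le> N" for k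
    proof -
      have "SS y k = (\<Sum>i=1..k. x i - (if i = j then t else 0))"
        unfolding SS_def using that by (intro sum.cong) (auto simp: y_def)
      also have "\<dots> = SS x k - (\<Sum>i=1..k. (if i = j then t else 0))"
        unfolding SS_def by (rule sum_subtractf)
      also have "(\<Sum>i=1..k. (if i = j then t else 0)) = (if j \<le> k then t else 0)"
        using j1 by (simp add: sum.delta)
      finally show ?thesis by simp
    qed
    have SyN: "SS y (Suc N) = B"
    proof -
      have "SS y (Suc N) = SS y N + y (Suc N)" by (simp add: SS_def)
      then show ?thesis using Sy[of N] jN SxN yN by simp
    qed
    have yf: "y \<in> feasible_N B (Suc N)"
      unfolding feasible_N_def
    proof (intro CollectI conjI ballI)
      fix i assume i: "i \<in> {1..Suc N}"
      show "0 \<le> y i"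
      proof (cases "i = Suc N")
        case True then show ?thesis using yN t0 by simp
      next
        case False
        show ?thesis
        proof (cases "i = j")
          case True then show ?thesis using yj t_def xj by simp
        next
          case False
          then show ?thesis using \<open>i \<noteq> Suc N\<close> yo xnn i by auto
        qed
      qed
    next
      show "(\<Sum>j = 1..Suc N. y j) \<le> B" using SyN unfolding SS_def by simp
    qed
    have s1: "(\<Sum>i=1..N. aa i * (1/2) * Lg (y i))
        = (\<Sum>i=1..N. aa i * (1/2) * Lg (x i)) + aa j * (1/2) * (Lg (x j - t) - Lg (x j))"
    proof -
      have "(\<Sum>i=1..N. aa i * (1/2) * Lg (y i)) - (\<Sum>i=1..N. aa i * (1/2) * Lg (x i))
          = (\<Sum>i=1..N. aa i * (1/2) * Lg (y i) - aa i * (1/2) * Lg (x i))"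
        by (rule sum_subtractf[symmetric])
      also have "\<dots> = (\<Sum>i=1..N. if i = j then aa j * (1/2) * (Lg (x j - t) - Lg (x j)) else 0)"
        by (intro sum.cong) (auto simp: yo yj algebra_simps)
      also have "\<dots> = aa j * (1/2) * (Lg (x j - t) - Lg (x j))"
        using j1 jN by (simp add: sum.delta)
      finally show ?thesis by simp
    qed
    have s2: "(\<Sum>k=1..N. bb k * GG (SS y k))
        = (\<Sum>k=1..N. bb k * GG (SS x k)) + (aa j - aa (Suc N)) * GG (B - t)"
    proof -
      have "(\<Sum>k=1..N. bb k * GG (SS y k)) - (\<Sum>k=1..N. bb k * GG (SS x k))
          = (\<Sum>k=1..N. bb k * GG (SS y k) - bb k * GG (SS x k))"
        by (rule sum_subtractf[symmetric])
      also have "\<dots> = (\<Sum>k=1..N. if j \<le> k then bb k * GG (B - t) else 0)"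
        by (intro sum.cong) (auto simp: Sy SSB GGB)
      also have "\<dots> = (\<Sum>k\<in>{1..N} \<inter> {k. j \<le> k}. bb k * GG (B - t))"
        by (simp add: sum.If_cases)
      also have "{1..N} \<inter> {k. j \<le> k} = {j..N}" using j1 by auto
      also have "(\<Sum>k\<in>{j..N}. bb k * GG (B - t)) = (\<Sum>k=j..N. bb k) * GG (B - t)"
        by (simp add: sum_distrib_right)
      also have "\<dots> = (aa j - aa (Suc N)) * GG (B - t)" using jN by (simp add: sum_bb)
      finally show ?thesis by simp
    qed
    have diff: "FF (Suc N) y - FF N x = aa j * (1/2) * (Lg (x j - t) - Lg (x j))
        + aa (Suc N) * (1/2) * Lg t + (aa j - aa (Suc N)) * GG (B - t)"
      unfolding FF_Suc s1 s2 SyN yN by (simp add: FF_def SxN GGB)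
    have "aa j * (1/2) * (Lg (x j - t) - Lg (x j)) + aa (Suc N) * (1/2) * Lg t + (aa j - aa (Suc N)) * GG (B - t)
       = (aa j * (ln (1 + g * (x j - t)) - ln (1 + g * x j)) + aa (Suc N) * ln (1 + g * t)
             + (aa j - aa (Suc N)) * (real w * ln (1 + g * t / real w))) / (2 * ln 2)"
      unfolding Lg_def GG_def log_def by (simp add: field_simps)
    moreover have "0 < aa j * (ln (1 + g * (x j - t)) - ln (1 + g * x j)) + aa (Suc N) * ln (1 + g * t)
             + (aa j - aa (Suc N)) * (real w * ln (1 + g * t / real w))"
    proof (rule keyB[OF g0 xj t_def aa_pos])
      show "0 \<le> aa (Suc N)" using aa_pos less_imp_le by blast
      have "0 \<le> (\<Sum>k=j..N. bb k)" by (intro sum_nonneg bb_nonneg)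
      then show "aa (Suc N) \<le> aa j" using jN sum_bb[of j N] by simp
      show "1 \<le> real w" using w1 by simp
    qed
    ultimately have "0 < FF (Suc N) y - FF N x" unfolding diff using ln2 by simp
    then show ?thesis using yf by auto
  qed
qed

lemma step: "T_N_star p g B w N < T_N_star p g B w (Suc N)"
proof -
  obtain x where x: "x \<in> feasible_N B N" "T_N_star p g B w N = FF N x"
    using Tstar[of N] by blast
  obtain y where y: "y \<in> feasible_N B (Suc N)" "FF N x < FF (Suc N) y"
    using improve[OF x(1)] by blast
  obtain z where z: "T_N_star p g B w (Suc N) = FF (Suc N) z"
    "\<forall>y\<in>feasible_N B (Suc N). FF (Suc N) y \<le> FF (Suc N) z"
    using Tstar[of "Suc N"] by blast
  show ?thesis using x y z by fastforce
qed

end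

theorem corollary2:
  fixes p \<gamma> B :: real and w :: nat
  assumes "0 < p" "p < 1" "0 < \<gamma>" "0 < B" "1 \<le> w"
  shows "strict_mono_on {1..} (T_N_star p \<gamma> B w)"
proof -
  interpret setting p \<gamma> B w using assms by unfold_locales auto
  have h: "\<And>n. T_N_star p \<gamma> B w n < T_N_star p \<gamma> B w (Suc n)" by (rule step)
  show ?thesis
  proof (rule strict_mono_onI)
    fix r s :: nat assume "r < s"
    then show "T_N_star p \<gamma> B w r < T_N_star p \<gamma> B w s" by (rule lift_Suc_mono_less[where f="T_N_star p \<gamma> B w", OF h])
  qed
qed

end
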